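(* Let $A$ be a doubly nonnegative matrix whose largest eigenvalue $\lambda_1$ has multiplicity one, with corresponding eigenvector $x_1$. Then for any constant $r>0$, the matrix $B=A+r\,x_1x_1^T$ satisfies $B^t\ge A^t$ entry-wise for all $t\ge 0$.
   Context: A real matrix is doubly nonnegative if it is symmetric, positive semidefinite, and entry-wise nonnegative. For a positive semidefinite matrix $C=\sum_i\mu_iy_iy_i^T$ (orthonormal eigenvectors $y_i$, eigenvalues $\mu_i\ge0$) and $t>0$, $C^t=\sum_i\mu_i^ty_iy_i^T$, and $C^0=I$. *)

theory Defs
  imports "HOL-Analysis.Analysis"
begin

definition symmetric_mat :: "real^'n^'n \<Rightarrow> bool" where
  "symmetric_mat A \<longleftrightarrow> transpose A = A"

definition psd_mat :: "real^'n^'n \<Rightarrow> bool" where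
  "psd_mat A \<longleftrightarrow> symmetric_mat A \<and> (\<forall>x. 0 \<le> x \<bullet> (A *v x))"

definition entrywise_nonneg :: "real^'n^'n \<Rightarrow> bool" where
  "entrywise_nonneg A \<longleftrightarrow> (\<forall>i j. 0 \<le> A $ i $ j)"

definition doubly_nonneg :: "real^'n^'n \<Rightarrow> bool" where
  "doubly_nonneg A \<longleftrightarrow> symmetric_mat A \<and> psd_mat A \<and> entrywise_nonneg A"

definition entrywise_le :: "real^'n^'n \<Rightarrow> real^'n^'n \<Rightarrow> bool" where
  "entrywise_le A B \<longleftrightarrow> (\<forall>i j. A $ i $ j \<le> B $ i $ j)"

definition outer :: "real^'n \<Rightarrow> real^'n \<Rightarrow> real^'n^'n" where
  "outer x y = (\<chi> i j. x $ i * y $ j)"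

definition is_eigenvalue :: "real^'n^'n \<Rightarrow> real \<Rightarrow> bool" where
  "is_eigenvalue A l \<longleftrightarrow> (\<exists>v. v \<noteq> 0 \<and> A *v v = l *s v)"

definition eigenspace :: "real^'n^'n \<Rightarrow> real \<Rightarrow> (real^'n) set" where
  "eigenspace A l = {v. A *v v = l *s v}"

definition psd_spectral_decomp :: "real^'n^'n \<Rightarrow> ('n \<Rightarrow> real^'n) \<Rightarrow> ('n \<Rightarrow> real) \<Rightarrow> bool" where
  "psd_spectral_decomp C Y mu \<longleftrightarrow>
     (\<forall>i j. Y i \<bullet> Y j = (if i = j then 1 else 0)) \<and> (\<forall>i. 0 \<le> mu i) \<and>
     C = (\<Sum>i\<in>UNIV. mu i *\<^sub>R outer (Y i) (Y i))"

definition psd_rpow :: "real^'n^'n \<Rightarrow> real \<Rightarrow> real^'n^'n" where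
  "psd_rpow C t = (if t = 0 then mat 1 else
     (SOME M. \<exists>Y mu. psd_spectral_decomp C Y mu \<and>
        M = (\<Sum>i\<in>UNIV. (mu i powr t) *\<^sub>R outer (Y i) (Y i))))"

end

theory Submission
  imports Defs
begin
lemma sym_inner:
  assumes "symmetric_mat A"
  shows "(A *v x) \<bullet> y = x \<bullet> (A *v y)"
proof -
  have "A *v x = x v* A" using assms unfolding symmetric_mat_def
    by (metis vector_transpose_matrix)
  then show ?thesis by (simp add: dot_lmul_matrix)
qed

lemma outer_mult: "outer a b *v x = (b \<bullet> x) *\<^sub>R a"
  by (simp add: vec_eq_iff outer_def matrix_vector_mult_def inner_vec_def sum_distrib_left mult.commute mult.left_commute)

lemma sum_mat_mult:
  fixes M :: "'i \<Rightarrow> real^'n^'m"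
  shows "finite I \<Longrightarrow> (\<Sum>i\<in>I. c i *\<^sub>R M i) *v x = (\<Sum>i\<in>I. c i *\<^sub>R (M i *v x))"
proof (induction I rule: finite_induct)
  case empty
  then show ?case by (simp add: vec_eq_iff matrix_vector_mult_def)
next
  case (insert a F)
  then show ?case by (simp add: matrix_vector_mult_add_rdistrib scaleR_matrix_vector_assoc)
qed

lemma decomp_mult:
  fixes Y :: "'n::finite \<Rightarrow> real^'n"
  shows "(\<Sum>i\<in>UNIV. c i *\<^sub>R outer (Y i) (Y i)) *v x = (\<Sum>i\<in>UNIV. (c i * (Y i \<bullet> x)) *\<^sub>R Y i)"
  by (simp add: sum_mat_mult outer_mult)

definition orthonormal_fam :: "('n::finite \<Rightarrow> real^'n) \<Rightarrow> bool" where
  "orthonormal_fam Y \<longleftrightarrow> (\<forall>i j. Y i \<bullet> Y j = (if i = j then 1 else 0))"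

lemma mult_sum_vec:
  fixes A :: "real^'n^'m"
  shows "finite I \<Longrightarrow> A *v (\<Sum>i\<in>I. f i) = (\<Sum>i\<in>I. A *v f i)"
  by (induction I rule: finite_induct) (auto simp: matrix_vector_right_distrib)

lemma ortho_span:
  fixes Y :: "'n::finite \<Rightarrow> real^'n"
  assumes "orthonormal_fam Y"
  shows "span (range Y) = UNIV"
proof -
  have Y: "\<And>i j. Y i \<bullet> Y j = (if i = j then 1 else 0)" using assms unfolding orthonormal_fam_def by blast
  have inj: "inj Y"
  proof (rule injI)
    fix i j assume "Y i = Y j"
    then have "Y i \<bullet> Y j = 1" using Y[of i i] by simp
    then show "i = j" using Y[of i j] by (auto split: if_splits)
  qed
  have po: "pairwise orthogonal (range Y)"
    unfolding pairwise_def orthogonal_def using Y by auto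
  have nz: "0 \<notin> range Y"
    using Y by (metis image_iff inner_zero_left zero_neq_one)
  have ind: "independent (range Y)" using pairwise_orthogonal_independent[OF po nz] .
  have "card (range Y) = CARD('n)" using inj by (simp add: card_image)
  also have "\<dots> = dim (UNIV :: (real^'n) set)" by simp
  finally have c: "card (range Y) = dim (UNIV :: (real^'n) set)" .
  have "UNIV \<subseteq> span (range Y)"
    using card_eq_dim[of "range Y" UNIV] c ind by simp
  then show ?thesis by auto
qed

lemma ortho_expand:
  fixes Y :: "'n::finite \<Rightarrow> real^'n"
  assumes "orthonormal_fam Y"
  shows "x = (\<Sum>i\<in>UNIV. (Y i \<bullet> x) *\<^sub>R Y i)"
proof -
  have Y: "\<And>i j. Y i \<bullet> Y j = (if i = j then 1 else 0)" using assms unfolding orthonormal_fam_def by blast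
  define z where "z = x - (\<Sum>i\<in>UNIV. (Y i \<bullet> x) *\<^sub>R Y i)"
  have "\<And>j. Y j \<bullet> z = 0"
  proof -
    fix j
    have "Y j \<bullet> (\<Sum>i\<in>UNIV. (Y i \<bullet> x) *\<^sub>R Y i) = (\<Sum>i\<in>UNIV. (Y i \<bullet> x) * (Y j \<bullet> Y i))"
      by (simp add: inner_sum_right)
    also have "\<dots> = (\<Sum>i\<in>UNIV. if i = j then Y j \<bullet> x else 0)"
      by (rule sum.cong) (auto simp: Y)
    also have "\<dots> = Y j \<bullet> x" by simp
    finally show "Y j \<bullet> z = 0" by (simp add: z_def inner_diff_right)
  qed
  then have "\<And>y. y \<in> range Y \<Longrightarrow> orthogonal z y"
    by (auto simp: orthogonal_def inner_commute)
  then have "orthogonal z z"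
    using orthogonal_to_span[of z "range Y" z] ortho_span[OF assms] by blast
  then have "z = 0" by (simp add: orthogonal_def)
  then show ?thesis by (simp add: z_def)
qed

lemma decomp_from_eig:
  fixes M :: "real^'n^'n"
  assumes "orthonormal_fam Y" and "\<And>j. M *v Y j = nu j *\<^sub>R Y j"
  shows "M = (\<Sum>i\<in>UNIV. nu i *\<^sub>R outer (Y i) (Y i))"
proof (subst matrix_eq, intro allI)
  fix x :: "real^'n"
  have "M *v x = M *v (\<Sum>i\<in>UNIV. (Y i \<bullet> x) *\<^sub>R Y i)"
    using ortho_expand[OF assms(1), of x] by simp
  also have "\<dots> = (\<Sum>i\<in>UNIV. (nu i * (Y i \<bullet> x)) *\<^sub>R Y i)"
    by (simp add: mult_sum_vec matrix_vector_mult_scaleR assms(2) mult.commute)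
  also have "\<dots> = (\<Sum>i\<in>UNIV. nu i *\<^sub>R outer (Y i) (Y i)) *v x"
    by (simp add: decomp_mult)
  finally show "M *v x = (\<Sum>i\<in>UNIV. nu i *\<^sub>R outer (Y i) (Y i)) *v x" .
qed

lemma decomp_eig:
  assumes "orthonormal_fam Y"
  shows "(\<Sum>i\<in>UNIV. c i *\<^sub>R outer (Y i) (Y i)) *v Y j = c j *\<^sub>R Y j"
proof -
  have Y: "\<And>i j. Y i \<bullet> Y j = (if i = j then 1 else 0)" using assms unfolding orthonormal_fam_def by blast
  have "(\<Sum>i\<in>UNIV. c i *\<^sub>R outer (Y i) (Y i)) *v Y j = (\<Sum>i\<in>UNIV. (c i * (Y i \<bullet> Y j)) *\<^sub>R Y i)"
    by (simp add: decomp_mult)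
  also have "\<dots> = (\<Sum>i\<in>UNIV. if i = j then c j *\<^sub>R Y j else 0)"
    by (rule sum.cong) (auto simp: Y)
  finally show ?thesis by simp
qed

lemma decomp_symmetric:
  "symmetric_mat (\<Sum>i\<in>UNIV. c i *\<^sub>R outer (Y i) (Y i))"
  unfolding symmetric_mat_def
  by (simp add: vec_eq_iff transpose_def outer_def mult.commute)

lemma decomp_unique:
  fixes Y Z :: "'n::finite \<Rightarrow> real^'n"
  assumes oY: "orthonormal_fam Y" and oZ: "orthonormal_fam Z"
    and CY: "C = (\<Sum>i\<in>UNIV. mu i *\<^sub>R outer (Y i) (Y i))"
    and CZ: "C = (\<Sum>i\<in>UNIV. nu i *\<^sub>R outer (Z i) (Z i))"
  shows "(\<Sum>i\<in>UNIV. f (mu i) *\<^sub>R outer (Y i) (Y i)) = (\<Sum>i\<in>UNIV. f (nu i) *\<^sub>R outer (Z i) (Z i))"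
proof -
  define M where "M = (\<Sum>i\<in>UNIV. f (mu i) *\<^sub>R outer (Y i) (Y i))"
  have sym: "symmetric_mat C" using CY decomp_symmetric by simp
  have eY: "\<And>i. C *v Y i = mu i *\<^sub>R Y i" using CY decomp_eig[OF oY] by simp
  have eZ: "\<And>j. C *v Z j = nu j *\<^sub>R Z j" using CZ decomp_eig[OF oZ] by simp
  have key: "\<And>i j. f (mu i) * (Y i \<bullet> Z j) = f (nu j) * (Y i \<bullet> Z j)"
  proof -
    fix i j
    have "mu i * (Y i \<bullet> Z j) = (C *v Y i) \<bullet> Z j" by (simp add: eY)
    also have "\<dots> = Y i \<bullet> (C *v Z j)" using sym_inner[OF sym] by simp
    also have "\<dots> = nu j * (Y i \<bullet> Z j)" by (simp add: eZ)
    finally have "mu i * (Y i \<bullet> Z j) = nu j * (Y i \<bullet> Z j)" .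
    then have "Y i \<bullet> Z j = 0 \<or> mu i = nu j" by auto
    then show "f (mu i) * (Y i \<bullet> Z j) = f (nu j) * (Y i \<bullet> Z j)" by auto
  qed
  have "\<And>j. M *v Z j = f (nu j) *\<^sub>R Z j"
  proof -
    fix j
    have "M *v Z j = (\<Sum>i\<in>UNIV. (f (mu i) * (Y i \<bullet> Z j)) *\<^sub>R Y i)"
      by (simp add: M_def decomp_mult)
    also have "\<dots> = (\<Sum>i\<in>UNIV. f (nu j) *\<^sub>R ((Y i \<bullet> Z j) *\<^sub>R Y i))"
      by (simp add: key)
    also have "\<dots> = f (nu j) *\<^sub>R (\<Sum>i\<in>UNIV. (Y i \<bullet> Z j) *\<^sub>R Y i)"
      by (simp add: scaleR_sum_right)
    also have "\<dots> = f (nu j) *\<^sub>R Z j" using ortho_expand[OF oY, of "Z j"] by simp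
    finally show "M *v Z j = f (nu j) *\<^sub>R Z j" .
  qed
  then have "M = (\<Sum>i\<in>UNIV. f (nu i) *\<^sub>R outer (Z i) (Z i))"
    using decomp_from_eig[OF oZ, of M "\<lambda>j. f (nu j)"] by blast
  then show ?thesis using M_def by simp
qed

lemma rpow_eq:
  assumes "t \<noteq> 0" and "psd_spectral_decomp C Y mu"
  shows "psd_rpow C t = (\<Sum>i\<in>UNIV. (mu i powr t) *\<^sub>R outer (Y i) (Y i))"
proof -
  let ?P = "\<lambda>M. \<exists>Y mu. psd_spectral_decomp C Y mu \<and> M = (\<Sum>i\<in>UNIV. (mu i powr t) *\<^sub>R outer (Y i) (Y i))"
  have ex: "\<exists>M. ?P M" using assms(2) by blast
  obtain Y' mu' where d': "psd_spectral_decomp C Y' mu'"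
    and M: "(SOME M. ?P M) = (\<Sum>i\<in>UNIV. (mu' i powr t) *\<^sub>R outer (Y' i) (Y' i))"
    using someI_ex[OF ex] by blast
  have "psd_rpow C t = (SOME M. ?P M)" using assms(1) by (simp add: psd_rpow_def)
  also have "\<dots> = (\<Sum>i\<in>UNIV. (mu i powr t) *\<^sub>R outer (Y i) (Y i))"
    unfolding M
    apply (rule decomp_unique[where C=C and f="\<lambda>x. x powr t" and Y=Y' and Z=Y and mu=mu' and nu=mu])
    using d' assms(2) by (auto simp: psd_spectral_decomp_def orthonormal_fam_def)
  finally show ?thesis .
qed

lemma quad_nonpos:
  fixes a b :: real
  assumes "\<And>s. 2 * s * a + s^2 * b \<le> 0"
  shows "a = 0"
proof -
  define s where "s = a / (\<bar>b\<bar> + 1)"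
  have pos: "\<bar>b\<bar> + 1 > 0" by simp
  have h: "s * (\<bar>b\<bar> + 1) = a" using pos by (simp add: s_def)
  have sa: "s * a = s^2 * (\<bar>b\<bar> + 1)" 
  proof -
    have "s * a = s * (s * (\<bar>b\<bar> + 1))" by (simp add: h)
    then show ?thesis by (simp add: power2_eq_square)
  qed
  have "2 * s * a + s^2 * b \<le> 0" by (rule assms)
  moreover have "s^2*b \<ge> - (s^2*\<bar>b\<bar>)"
    using mult_left_mono[of "-\<bar>b\<bar>" b "s^2"] by simp
  ultimately have "s^2 * (\<bar>b\<bar> + 2) \<le> 0" using sa by (simp add: algebra_simps)
  moreover have "\<bar>b\<bar> + 2 > 0" by simp
  ultimately have "s^2 \<le> 0" by (simp add: mult_le_0_iff)
  then have "s = 0" by simp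
  then show "a = 0" using pos by (simp add: s_def)
qed

lemma cont_quad: "continuous_on K (\<lambda>x::real^'n. x \<bullet> (A *v x))"
  by (intro continuous_intros)

lemma spectral_sub:
  fixes A :: "real^'n^'n"
  assumes sym: "symmetric_mat A"
  shows "subspace S \<Longrightarrow> (\<forall>x\<in>S. A *v x \<in> S) \<Longrightarrow>
    \<exists>B. B \<subseteq> S \<and> pairwise orthogonal B \<and> (\<forall>x\<in>B. norm x = 1) \<and> S \<subseteq> span B \<and>
        (\<forall>x\<in>B. \<exists>l. A *v x = l *\<^sub>R x)"
proof (induction "dim S" arbitrary: S rule: less_induct)
  case less
  note sub = less.prems(1) and inv = less.prems(2)
  show ?case
  proof (cases "S \<subseteq> {0}")
    case True
    then show ?thesis by (intro exI[of _ "{}"]) auto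
  next
    case False
    then obtain y where yS: "y \<in> S" and y0: "y \<noteq> 0" by auto
    define K where "K = sphere (0::real^'n) 1 \<inter> S"
    have cK: "compact K" unfolding K_def
      by (intro compact_Int_closed compact_sphere closed_subspace sub)
    have "y /\<^sub>R norm y \<in> K" using yS y0 sub unfolding K_def
      by (simp add: subspace_scale)
    then have neK: "K \<noteq> {}" by auto
    obtain v where vK: "v \<in> K" and vmax: "\<And>z. z \<in> K \<Longrightarrow> z \<bullet> (A *v z) \<le> v \<bullet> (A *v v)"
      using continuous_attains_sup[OF cK neK cont_quad[of K A]] by blast
    define m where "m = v \<bullet> (A *v v)"
    have vS: "v \<in> S" and nv: "norm v = 1" using vK by (auto simp: K_def)
    have vv: "v \<bullet> v = 1" using nv by (simp add: dot_square_norm)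
    have bound: "z \<bullet> (A *v z) \<le> m * (z \<bullet> z)" if "z \<in> S" for z
    proof (cases "z = 0")
      case True then show ?thesis by simp
    next
      case False
      have "z /\<^sub>R norm z \<in> K" using that False sub unfolding K_def
        by (simp add: subspace_scale)
      then have "(z /\<^sub>R norm z) \<bullet> (A *v (z /\<^sub>R norm z)) \<le> m" using vmax m_def by blast
      then have "(z \<bullet> (A *v z)) / (norm z)^2 \<le> m"
        by (simp add: matrix_vector_mult_scaleR power2_eq_square divide_inverse mult_ac)
      moreover have "(norm z)^2 > 0" using False by simp
      ultimately have "z \<bullet> (A *v z) \<le> m * (norm z)^2" by (simp add: divide_le_eq)
      then show ?thesis by (simp add: dot_square_norm)
    qed
    have orth: "w \<bullet> (A *v v) - m * (w \<bullet> v) = 0" if wS: "w \<in> S" for w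
    proof (rule quad_nonpos[where b = "w \<bullet> (A *v w) - m * (w \<bullet> w)"])
      fix s :: real
      have "v + s *\<^sub>R w \<in> S" using vS wS sub by (simp add: subspace_add subspace_scale)
      then have b: "(v + s *\<^sub>R w) \<bullet> (A *v (v + s *\<^sub>R w)) \<le> m * ((v + s *\<^sub>R w) \<bullet> (v + s *\<^sub>R w))"
        by (rule bound)
      have vw: "v \<bullet> (A *v w) = w \<bullet> (A *v v)"
        using sym_inner[OF sym, of w v] by (simp add: inner_commute)
      have e1: "(v + s *\<^sub>R w) \<bullet> (A *v (v + s *\<^sub>R w)) = m + 2 * s * (w \<bullet> (A *v v)) + s^2 * (w \<bullet> (A *v w))"
        by (simp add: matrix_vector_right_distrib matrix_vector_mult_scaleR inner_add_left inner_add_right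
            m_def vw power2_eq_square algebra_simps)
      have e2: "(v + s *\<^sub>R w) \<bullet> (v + s *\<^sub>R w) = 1 + 2 * s * (w \<bullet> v) + s^2 * (w \<bullet> w)"
        by (simp add: inner_add_left inner_add_right vv inner_commute power2_eq_square algebra_simps)
      have b2: "m + 2 * s * (w \<bullet> (A *v v)) + s^2 * (w \<bullet> (A *v w)) \<le> m * (1 + 2 * s * (w \<bullet> v) + s^2 * (w \<bullet> w))"
        using b unfolding e1 e2 .
      have g: "2 * s * (w \<bullet> (A *v v) - m * (w \<bullet> v)) + s^2 * (w \<bullet> (A *v w) - m * (w \<bullet> w))
          = (m + 2 * s * (w \<bullet> (A *v v)) + s^2 * (w \<bullet> (A *v w))) - m * (1 + 2 * s * (w \<bullet> v) + s^2 * (w \<bullet> w))"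
        by (simp add: algebra_simps)
      show "2 * s * (w \<bullet> (A *v v) - m * (w \<bullet> v)) + s^2 * (w \<bullet> (A *v w) - m * (w \<bullet> w)) \<le> 0"
        unfolding g using b2 by linarith
    qed
    define w where "w = A *v v - m *\<^sub>R v"
    have wS: "w \<in> S" using inv vS sub by (simp add: w_def subspace_diff subspace_scale)
    have "w \<bullet> w = w \<bullet> (A *v v) - m * (w \<bullet> v)" by (simp add: w_def inner_diff_right)
    then have "w \<bullet> w = 0" using orth[OF wS] by simp
    then have eig: "A *v v = m *\<^sub>R v" by (simp add: w_def)
    define S' where "S' = {x \<in> S. v \<bullet> x = 0}"
    have sub': "subspace S'" using sub unfolding S'_def subspace_def
      by (auto simp: inner_add_right)
    have inv': "\<forall>x\<in>S'. A *v x \<in> S'"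
    proof
      fix x assume "x \<in> S'"
      then have xS: "x \<in> S" and "v \<bullet> x = 0" by (auto simp: S'_def)
      have "v \<bullet> (A *v x) = (A *v v) \<bullet> x" using sym_inner[OF sym, of v x] by simp
      also have "\<dots> = 0" using \<open>v \<bullet> x = 0\<close> by (simp add: eig)
      finally show "A *v x \<in> S'" using inv xS by (simp add: S'_def)
    qed
    have "v \<notin> S'" using vv by (simp add: S'_def)
    moreover have "S' \<subseteq> S" by (auto simp: S'_def)
    ultimately have "S' \<subset> S" using vS by blast
    then have "span S' \<subset> span S" using sub sub' by (metis span_eq_iff)
    then have "dim S' < dim S" by (rule dim_psubset)
    then obtain B' where B'S: "B' \<subseteq> S'" and po: "pairwise orthogonal B'" and nB: "\<forall>x\<in>B'. norm x = 1"
      and spB: "S' \<subseteq> span B'" and eB: "\<forall>x\<in>B'. \<exists>l. A *v x = l *\<^sub>R x"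
      using less.hyps[OF _ sub' inv'] by blast
    show ?thesis
    proof (intro exI[of _ "insert v B'"] conjI)
      show "insert v B' \<subseteq> S" using vS B'S by (auto simp: S'_def)
      show "pairwise orthogonal (insert v B')"
        using po B'S by (auto simp: pairwise_insert S'_def orthogonal_def inner_commute)
      show "\<forall>x\<in>insert v B'. norm x = 1" using nv nB by auto
      show "\<forall>x\<in>insert v B'. \<exists>l. A *v x = l *\<^sub>R x" using eig eB by auto
      show "S \<subseteq> span (insert v B')"
      proof
        fix x assume xS: "x \<in> S"
        have "x - (v \<bullet> x) *\<^sub>R v \<in> S'"
          using xS vS sub vv by (simp add: S'_def subspace_diff subspace_scale inner_diff_right)
        then have "x - (v \<bullet> x) *\<^sub>R v \<in> span B'" using spB by auto
        then show "x \<in> span (insert v B')" using span_breakdown_eq by blast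
      qed
    qed
  qed
qed

lemma spectral:
  fixes A :: "real^'n^'n"
  assumes sym: "symmetric_mat A"
  shows "\<exists>Y mu. orthonormal_fam Y \<and> (\<forall>i. A *v Y i = mu i *\<^sub>R Y i)"
proof -
  obtain B where po: "pairwise orthogonal B" and nB: "\<forall>x\<in>B. norm x = 1"
    and spB: "(UNIV::(real^'n) set) \<subseteq> span B" and eB: "\<forall>x\<in>B. \<exists>l. A *v x = l *\<^sub>R x"
    using spectral_sub[OF sym, of UNIV] by auto
  have "0 \<notin> B" using nB by force
  then have ind: "independent B" using pairwise_orthogonal_independent[OF po] by blast
  then have fin: "finite B" using indep_card_eq_dim_span by blast
  have "card B = dim (UNIV::(real^'n) set)"
    using basis_card_eq_dim[of B UNIV] spB ind by blast
  then have cB: "card (UNIV::'n set) = card B" by simp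
  obtain h where bij: "bij_betw h (UNIV::'n set) B"
    using finite_same_card_bij[OF _ fin cB] by auto
  define mu where "mu i = (SOME l. A *v h i = l *\<^sub>R h i)" for i
  have hB: "h i \<in> B" for i using bij bij_betwE by blast
  have "orthonormal_fam h"
    unfolding orthonormal_fam_def
  proof (intro allI)
    fix i j
    show "h i \<bullet> h j = (if i = j then 1 else 0)"
    proof (cases "i = j")
      case True
      then show ?thesis using nB hB[of i] by (simp add: dot_square_norm)
    next
      case False
      then have "h i \<noteq> h j" using bij by (metis UNIV_I bij_betw_iff_bijections)
      then show ?thesis using po hB[of i] hB[of j] False
        by (auto simp: pairwise_def orthogonal_def)
    qed
  qed
  moreover have "\<forall>i. A *v h i = mu i *\<^sub>R h i"
    using eB hB unfolding mu_def by (metis (mono_tags) someI_ex)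
  ultimately show ?thesis by blast
qed

lemma psd_decomp_exists:
  fixes A :: "real^'n^'n"
  assumes "psd_mat A"
  shows "\<exists>Y mu. psd_spectral_decomp A Y mu"
proof -
  have sym: "symmetric_mat A" using assms psd_mat_def by blast
  obtain Y mu where oY: "orthonormal_fam Y" and e: "\<forall>i. A *v Y i = mu i *\<^sub>R Y i"
    using spectral[OF sym] by blast
  have "0 \<le> mu i" for i
  proof -
    have "0 \<le> Y i \<bullet> (A *v Y i)" using assms psd_mat_def by blast
    also have "\<dots> = mu i" using e oY by (simp add: orthonormal_fam_def)
    finally show ?thesis .
  qed
  moreover have "A = (\<Sum>i\<in>UNIV. mu i *\<^sub>R outer (Y i) (Y i))"
    using decomp_from_eig[OF oY] e by blast
  ultimately show ?thesis using oY unfolding psd_spectral_decomp_def orthonormal_fam_def by blast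
qed

lemma one_dim:
  fixes E :: "(real^'n) set"
  assumes "subspace E" "dim E = 1" "y \<in> E" "z \<in> E" "z \<noteq> 0"
  shows "\<exists>c. y = c *\<^sub>R z"
proof (rule ccontr)
  assume "\<not> ?thesis"
  then have ns: "y \<notin> span {z}" by (auto simp: span_singleton)
  then have yz: "y \<noteq> z" using span_base by blast
  have "independent {z}" using assms(5) by (simp add: independent_insert)
  then have "independent {y, z}" using ns yz by (simp add: independent_insert)
  then have "card {y, z} \<le> dim E" using independent_card_le_dim[of "{y,z}" E] assms by blast
  then show False using yz assms(2) by simp
qed

lemma decomp_entry:
  "(\<Sum>i\<in>UNIV. c i *\<^sub>R outer (Y i) (Y i)) $ a $ b = (\<Sum>i\<in>UNIV. c i * (Y i $ a * Y i $ b))"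
  by (simp add: sum_component outer_def)

lemma eigenspace_sub: "subspace (eigenspace A l)"
  unfolding subspace_def eigenspace_def
  by (simp add: matrix_vector_right_distrib matrix_vector_mult_scaleR scalar_mult_eq_scaleR algebra_simps)

lemma quad_abs:
  fixes A :: "real^'n^'n" and x :: "real^'n"
  assumes "entrywise_nonneg A"
  shows "x \<bullet> (A *v x) \<le> (\<chi> k. \<bar>x $ k\<bar>) \<bullet> (A *v (\<chi> k. \<bar>x $ k\<bar>))"
proof -
  have "x \<bullet> (A *v x) = (\<Sum>k\<in>UNIV. \<Sum>l\<in>UNIV. x $ k * (A $ k $ l * x $ l))"
    by (simp add: inner_vec_def matrix_vector_mult_def sum_distrib_left)
  also have "\<dots> \<le> (\<Sum>k\<in>UNIV. \<Sum>l\<in>UNIV. \<bar>x $ k\<bar> * (A $ k $ l * \<bar>x $ l\<bar>))"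
  proof (intro sum_mono)
    fix k l
    have "x $ k * (A $ k $ l * x $ l) \<le> \<bar>x $ k * (A $ k $ l * x $ l)\<bar>" by simp
    also have "\<dots> = \<bar>x $ k\<bar> * (A $ k $ l * \<bar>x $ l\<bar>)"
      using assms by (simp add: entrywise_nonneg_def abs_mult)
    finally show "x $ k * (A $ k $ l * x $ l) \<le> \<bar>x $ k\<bar> * (A $ k $ l * \<bar>x $ l\<bar>)" .
  qed
  also have "\<dots> = (\<chi> k. \<bar>x $ k\<bar>) \<bullet> (A *v (\<chi> k. \<bar>x $ k\<bar>))"
    by (simp add: inner_vec_def matrix_vector_mult_def sum_distrib_left)
  finally show ?thesis .
qed

theorem theorem5p2:
  fixes A :: "real^'n^'n" and lam1 r :: real and x1 :: "real^'n"
  assumes "doubly_nonneg A"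
    and "is_eigenvalue A lam1"
    and "\<And>\<mu>. is_eigenvalue A \<mu> \<Longrightarrow> \<mu> \<le> lam1"
    and "dim (eigenspace A lam1) = 1"
    and "x1 \<noteq> 0" and "A *v x1 = lam1 *s x1"
    and "r > 0"
  shows "\<forall>t\<ge>0. entrywise_le (psd_rpow A t) (psd_rpow (A + r *\<^sub>R outer x1 x1) t)"
proof (intro allI impI)
  fix t :: real assume "t \<ge> 0"
  show "entrywise_le (psd_rpow A t) (psd_rpow (A + r *\<^sub>R outer x1 x1) t)"
  proof (cases "t = 0")
    case True
    then show ?thesis by (simp add: psd_rpow_def entrywise_le_def)
  next
    case False
    then have tpos: "t > 0" using \<open>t \<ge> 0\<close> by simp
    have sym: "symmetric_mat A" and psd: "psd_mat A" and nn: "entrywise_nonneg A"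
      using assms(1) by (auto simp: doubly_nonneg_def)
    obtain Y mu where dA: "psd_spectral_decomp A Y mu" using psd_decomp_exists[OF psd] by blast
    have oY: "orthonormal_fam Y" and mu0: "\<And>i. 0 \<le> mu i"
      and Adec: "A = (\<Sum>i\<in>UNIV. mu i *\<^sub>R outer (Y i) (Y i))"
      using dA by (auto simp: psd_spectral_decomp_def orthonormal_fam_def)
    have Yn: "\<And>i. Y i \<bullet> Y i = 1" using oY by (simp add: orthonormal_fam_def)
    have eY: "\<And>i. A *v Y i = mu i *\<^sub>R Y i" using decomp_eig[OF oY] Adec by metis
    have Y0: "\<And>i. Y i \<noteq> 0" using Yn by (metis inner_zero_left zero_neq_one)
    have mule: "\<And>i. mu i \<le> lam1"
      using assms(3) eY Y0 by (simp add: is_eigenvalue_def scalar_mult_eq_scaleR) blast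
    define E where "E = eigenspace A lam1"
    have subE: "subspace E" by (simp add: E_def eigenspace_sub)
    have dE: "dim E = 1" using assms(4) E_def by simp
    have x1e: "A *v x1 = lam1 *\<^sub>R x1" using assms(6) by (simp add: scalar_mult_eq_scaleR)
    have x1E: "x1 \<in> E" using x1e by (simp add: E_def eigenspace_def scalar_mult_eq_scaleR)
    \<comment> \<open>Perron vector\<close>
    define w where "w = (\<chi> k. \<bar>x1 $ k\<bar>)"
    have ww: "w \<bullet> w = x1 \<bullet> x1" by (simp add: w_def inner_vec_def)
    have w0: "w \<noteq> 0"
    proof
      assume "w = 0"
      then have "x1 \<bullet> x1 = 0" using ww by simp
      then show False using assms(5) by simp
    qed
    have ge: "lam1 * (w \<bullet> w) \<le> w \<bullet> (A *v w)"
      using quad_abs[OF nn, of x1] x1e ww by (simp add: w_def)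
    have Aw: "A *v w = (\<Sum>i\<in>UNIV. (mu i * (Y i \<bullet> w)) *\<^sub>R Y i)"
      using decomp_mult[of mu Y w] Adec by simp
    have wAw: "w \<bullet> (A *v w) = (\<Sum>i\<in>UNIV. mu i * (Y i \<bullet> w)^2)"
      unfolding Aw by (simp add: inner_sum_right inner_commute power2_eq_square mult_ac)
    have wwY: "w \<bullet> w = (\<Sum>i\<in>UNIV. (Y i \<bullet> w)^2)"
    proof -
      have "w \<bullet> w = w \<bullet> (\<Sum>i\<in>UNIV. (Y i \<bullet> w) *\<^sub>R Y i)"
        using ortho_expand[OF oY, of w] by simp
      also have "\<dots> = (\<Sum>i\<in>UNIV. (Y i \<bullet> w)^2)"
        by (simp add: inner_sum_right inner_commute power2_eq_square)
      finally show ?thesis .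
    qed
    have "(\<Sum>i\<in>UNIV. (lam1 - mu i) * (Y i \<bullet> w)^2) = lam1 * (w \<bullet> w) - w \<bullet> (A *v w)"
      unfolding wAw wwY by (simp add: sum_distrib_left sum_subtractf left_diff_distrib)
    then have s0: "(\<Sum>i\<in>UNIV. (lam1 - mu i) * (Y i \<bullet> w)^2) \<le> 0" using ge by simp
    have nn2: "\<And>i. 0 \<le> (lam1 - mu i) * (Y i \<bullet> w)^2" using mule by simp
    have "(\<Sum>i\<in>UNIV. (lam1 - mu i) * (Y i \<bullet> w)^2) = 0"
    proof -
      have "0 \<le> (\<Sum>i\<in>UNIV. (lam1 - mu i) * (Y i \<bullet> w)^2)" using nn2 by (intro sum_nonneg) auto
      then show ?thesis using s0 by linarith
    qed
    then have z: "\<And>i. (lam1 - mu i) * (Y i \<bullet> w)^2 = 0"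
      using sum_nonneg_eq_0_iff[of UNIV "\<lambda>i. (lam1 - mu i) * (Y i \<bullet> w)^2"] nn2 by auto
    have mw: "\<And>i. mu i * (Y i \<bullet> w) = lam1 * (Y i \<bullet> w)"
      using z by (metis eq_iff_diff_eq_0 mult_eq_0_iff zero_eq_power2)
    have "A *v w = (\<Sum>i\<in>UNIV. lam1 *\<^sub>R ((Y i \<bullet> w) *\<^sub>R Y i))"
      unfolding Aw mw by simp
    also have "\<dots> = lam1 *\<^sub>R w"
    proof -
      have "(\<Sum>i\<in>UNIV. lam1 *\<^sub>R ((Y i \<bullet> w) *\<^sub>R Y i)) = lam1 *\<^sub>R (\<Sum>i\<in>UNIV. (Y i \<bullet> w) *\<^sub>R Y i)"
        by (rule scaleR_sum_right[symmetric])
      then show ?thesis using ortho_expand[OF oY, of w] by simp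
    qed
    finally have wE: "w \<in> E" by (simp add: E_def eigenspace_def scalar_mult_eq_scaleR)
    have orthx: "Y i \<bullet> x1 = 0" if "mu i \<noteq> lam1" for i
    proof -
      have "mu i * (Y i \<bullet> x1) = (A *v Y i) \<bullet> x1" by (simp add: eY)
      also have "\<dots> = Y i \<bullet> (A *v x1)" using sym_inner[OF sym] by simp
      also have "\<dots> = lam1 * (Y i \<bullet> x1)" by (simp add: x1e)
      finally show ?thesis using that by simp
    qed
    have YE: "Y i \<in> E" if "mu i = lam1" for i
      using eY that by (simp add: E_def eigenspace_def scalar_mult_eq_scaleR)
    have par: "x1 = (Y i \<bullet> x1) *\<^sub>R Y i" if hi: "mu i = lam1" for i
    proof -
      obtain d where d: "x1 = d *\<^sub>R Y i" using one_dim[OF subE dE x1E YE[OF hi] Y0] by blast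
      then have "Y i \<bullet> x1 = d" using Yn by simp
      then show ?thesis using d by simp
    qed
    have Ynn: "0 \<le> Y i $ a * Y i $ b" if hi: "mu i = lam1" for i a b
    proof -
      obtain c where c: "Y i = c *\<^sub>R w" using one_dim[OF subE dE YE[OF hi] wE w0] by blast
      have "Y i $ a * Y i $ b = c^2 * (\<bar>x1 $ a\<bar> * \<bar>x1 $ b\<bar>)"
        by (simp add: c w_def power2_eq_square)
      then show ?thesis by simp
    qed
    define nu where "nu i = mu i + r * (Y i \<bullet> x1)^2" for i
    define B where "B = A + r *\<^sub>R outer x1 x1"
    have eB: "B *v Y j = nu j *\<^sub>R Y j" for j
    proof -
      have "B *v Y j = mu j *\<^sub>R Y j + r *\<^sub>R ((x1 \<bullet> Y j) *\<^sub>R x1)"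
        by (simp add: B_def matrix_vector_mult_add_rdistrib scaleR_matrix_vector_assoc[symmetric] outer_mult eY)
      also have "\<dots> = nu j *\<^sub>R Y j"
      proof (cases "mu j = lam1")
        case True
        have "r *\<^sub>R ((x1 \<bullet> Y j) *\<^sub>R x1) = r *\<^sub>R ((x1 \<bullet> Y j) *\<^sub>R ((Y j \<bullet> x1) *\<^sub>R Y j))"
          using par[OF True] by simp
        then show ?thesis by (simp add: nu_def inner_commute power2_eq_square algebra_simps)
      next
        case False
        then show ?thesis using orthx[OF False] by (simp add: nu_def inner_commute)
      qed
      finally show ?thesis .
    qed
    have nu0: "\<And>i. 0 \<le> nu i" using mu0 assms(7) by (simp add: nu_def)
    have Bdec: "B = (\<Sum>i\<in>UNIV. nu i *\<^sub>R outer (Y i) (Y i))"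
      using decomp_from_eig[OF oY, of B nu] eB by blast
    have dB: "psd_spectral_decomp B Y nu"
      using oY nu0 Bdec by (simp add: psd_spectral_decomp_def orthonormal_fam_def)
    have RA: "psd_rpow A t = (\<Sum>i\<in>UNIV. (mu i powr t) *\<^sub>R outer (Y i) (Y i))"
      using rpow_eq[OF False dA] .
    have RB: "psd_rpow B t = (\<Sum>i\<in>UNIV. (nu i powr t) *\<^sub>R outer (Y i) (Y i))"
      using rpow_eq[OF False dB] .
    show ?thesis
      unfolding entrywise_le_def B_def[symmetric] RA RB decomp_entry
    proof (intro allI sum_mono)
      fix a b i
      show "mu i powr t * (Y i $ a * Y i $ b) \<le> nu i powr t * (Y i $ a * Y i $ b)"
      proof (cases "mu i = lam1")
        case True
        have "mu i powr t \<le> nu i powr t"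
          using mu0[of i] tpos assms(7) by (intro powr_mono2) (auto simp: nu_def)
        then show ?thesis using Ynn[OF True] by (rule mult_right_mono)
      next
        case False
        then show ?thesis using orthx[OF False] by (simp add: nu_def)
      qed
    qed
  qed
qed

end
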